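(* Suppose $\sigma_n,\sigma\in D(\mathbb R^d,X)$. Then $d_S(\sigma_n,\sigma)\to0$ if and only if there exist $\lambda_n\in\Lambda$ such that $\gamma(\lambda_n)\to0$ and $r(\sigma_n(x),\sigma(\lambda_n(x)))\to0$ uniformly over $x$ in compact subsets of $\mathbb R^d$.
   Context: $(X,r)$ is a complete separable metric space with $r\le1$; $d\ge1$. Order on $\mathbb R^d$: $x\le y$ iff $x_i\le y_i$ for all $i$; $|x|_\infty=\max_i|x_i|$. $D=D(\mathbb R^d,X)$ is the set of functions $\sigma:\mathbb R^d\to X$ such that for every bounded rectangle $[a,b)$ and $\varepsilon>0$ there are finite partitions $a_i=s_i^0<\dots<s_i^{m_i}=b_i$ of each coordinate axis with $\sup\{r(\sigma(x),\sigma(y)): s_i^{k_i}\le x_i,y_i<s_i^{k_i+1}\ (1\le i\le d)\}\le\varepsilon$ for every multi-index $k$. For $u>0$, $[x]_u=((x_1\wedge u)\vee(-u),\dots,(x_d\wedge u)\vee(-u))$. $\Lambda$ is the set of maps $\lambda(x)=(\lambda_1(x_1),\dots,\lambda_d(x_d))$ with each $\lambda_i:\mathbb R\to\mathbb R$ a bijective strictly increasing Lipschitz function, such that $\gamma(\lambda)=\gamma_0(\lambda)+\gamma_1(\lambda)<\infty$, where $\gamma_0(\lambda)=\sum_{i=1}^d\sup_{s\ne t}\big|\log\frac{\lambda_i(t)-\lambda_i(s)}{t-s}\big|$ and $\gamma_1(\lambda)=\int_0^\infty e^{-u}\big(1\wedge\sup_{x\in\mathbb R^d}|[\lambda(x)]_u-[x]_u|_\infty\big)du$.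 For $\rho,\sigma\in D$, $\lambda\in\Lambda$, $u>0$: $d(\rho,\sigma,\lambda,u)=\sup_x r(\rho([x]_u),\sigma([\lambda(x)]_u))$, and $d_S(\rho,\sigma)=\inf_{\lambda\in\Lambda}\{\gamma(\lambda)\vee\int_0^\infty e^{-u}d(\rho,\sigma,\lambda,u)du\}$. *)

theory Defs
  imports "HOL-Analysis.Analysis"
begin

text \<open>Points of R^d are vectors real^'n ('n a finite index type, d = CARD('n) \<ge> 1).
  The metric space (X,r) is a type 'a of class polish_space (complete, separable metric)
  with metric dist; the bound r \<le> 1 is an explicit assumption of the theorem.\<close>

definition supnorm :: "real^'n::finite \<Rightarrow> real" where
  "supnorm x = Max (range (\<lambda>i. \<bar>x$i\<bar>))"

definition Dspace :: "(real^'n::finite \<Rightarrow> 'a::metric_space) set" where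
  "Dspace = {\<sigma>. \<forall>a b :: real^'n. \<forall>\<epsilon>>0. (\<forall>i. a$i < b$i) \<longrightarrow>
      (\<exists>(s :: 'n \<Rightarrow> nat \<Rightarrow> real) (m :: 'n \<Rightarrow> nat).
         (\<forall>i. s i 0 = a$i \<and> s i (m i) = b$i \<and> (\<forall>j < m i. s i j < s i (Suc j))) \<and>
         (\<forall>k :: 'n \<Rightarrow> nat. (\<forall>i. k i < m i) \<longrightarrow>
            (\<forall>x y. (\<forall>i. s i (k i) \<le> x$i \<and> x$i < s i (Suc (k i)) \<and>
                        s i (k i) \<le> y$i \<and> y$i < s i (Suc (k i)))
                   \<longrightarrow> dist (\<sigma> x) (\<sigma> y) \<le> \<epsilon>)))}"

definition trunc :: "real \<Rightarrow> real^'n \<Rightarrow> real^'n" where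
  "trunc u x = (\<chi> i. max (min (x$i) u) (- u))"

text \<open>A time change lambda is given by its coordinate maps lambda_i.\<close>
definition lam_app :: "('n \<Rightarrow> real \<Rightarrow> real) \<Rightarrow> real^'n \<Rightarrow> real^'n" where
  "lam_app l x = (\<chi> i. l i (x$i))"

definition gamma0 :: "('n::finite \<Rightarrow> real \<Rightarrow> real) \<Rightarrow> ereal" where
  "gamma0 l = (\<Sum>i\<in>UNIV. (SUP st\<in>{(s,t). s \<noteq> (t::real)}.
      ereal \<bar>ln ((l i (snd st) - l i (fst st)) / (snd st - fst st))\<bar>))"

definition gamma1 :: "('n::finite \<Rightarrow> real \<Rightarrow> real) \<Rightarrow> real" where
  "gamma1 l = (LINT u:{0<..}|lborel.
      exp (- u) * min 1 (SUP x\<in>UNIV. supnorm (trunc u (lam_app l x) - trunc u x)))"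

definition gamma :: "('n::finite \<Rightarrow> real \<Rightarrow> real) \<Rightarrow> ereal" where
  "gamma l = gamma0 l + ereal (gamma1 l)"

definition Lambda :: "('n::finite \<Rightarrow> real \<Rightarrow> real) set" where
  "Lambda = {l. (\<forall>i. bij (l i) \<and> strict_mono (l i) \<and> (\<exists>L. L-lipschitz_on UNIV (l i)))
               \<and> gamma l < \<infinity>}"

definition dlu :: "(real^'n::finite \<Rightarrow> 'a::metric_space) \<Rightarrow> (real^'n \<Rightarrow> 'a)
                    \<Rightarrow> ('n \<Rightarrow> real \<Rightarrow> real) \<Rightarrow> real \<Rightarrow> real" where
  "dlu \<rho> \<sigma> l u = (SUP x\<in>UNIV. dist (\<rho> (trunc u x)) (\<sigma> (trunc u (lam_app l x))))"

definition dS :: "(real^'n::finite \<Rightarrow> 'a::metric_space) \<Rightarrow> (real^'n \<Rightarrow> 'a) \<Rightarrow> ereal" where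
  "dS \<rho> \<sigma> = (INF l\<in>Lambda. max (gamma l)
      (ereal (LINT u:{0<..}|lborel. exp (- u) * dlu \<rho> \<sigma> l u)))"

end

theory Submission
  imports Defs
begin

definition clip :: "real \<Rightarrow> real \<Rightarrow> real" where
  "clip u t = max (min t u) (- u)"

lemma trunc_nth[simp]: "trunc u x $ i = clip u (x$i)"
  by (simp add: trunc_def clip_def)

lemma lam_nth[simp]: "lam_app l x $ i = l i (x$i)"
  by (simp add: lam_app_def)

lemma supnorm_ge: "\<bar>x$i\<bar> \<le> supnorm x"
  unfolding supnorm_def by (rule Max_ge) auto

lemma supnorm_le: "(\<And>i. \<bar>x$i\<bar> \<le> c) \<Longrightarrow> supnorm x \<le> c"
  unfolding supnorm_def by (subst Max_le_iff) auto

lemma supnorm_nonneg: "0 \<le> supnorm x"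
  using supnorm_ge[of x] abs_ge_zero order_trans by blast

lemma clip_bound: "\<bar>clip u t\<bar> \<le> \<bar>u\<bar>"
  by (auto simp: clip_def)

lemma clip_mono_diff: "u \<le> u' \<Longrightarrow> \<bar>clip u a - clip u b\<bar> \<le> \<bar>clip u' a - clip u' b\<bar>"
  by (auto simp: clip_def min_def max_def abs_if)

definition Sg :: "('n::finite \<Rightarrow> real \<Rightarrow> real) \<Rightarrow> real \<Rightarrow> real" where
  "Sg l u = (SUP x. supnorm (trunc u (lam_app l x) - trunc u x))"

lemma Sg_term_bound: "supnorm (trunc u (lam_app l x) - trunc u x) \<le> 2 * \<bar>u\<bar>"
proof (rule supnorm_le)
  fix i
  show "\<bar>(trunc u (lam_app l x) - trunc u x) $ i\<bar> \<le> 2 * \<bar>u\<bar>"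
    using clip_bound[of u "l i (x$i)"] clip_bound[of u "x$i"] by simp
qed

lemma Sg_bdd: "bdd_above (range (\<lambda>x. supnorm (trunc u (lam_app l x) - trunc u x)))"
  using Sg_term_bound by (intro bdd_aboveI) blast

lemma Sg_upper: "supnorm (trunc u (lam_app l x) - trunc u x) \<le> Sg l u"
  unfolding Sg_def by (rule cSUP_upper[OF _ Sg_bdd]) auto

lemma Sg_nonneg: "0 \<le> Sg l u"
  using Sg_upper supnorm_nonneg order_trans by blast

lemma Sg_mono: "mono (Sg l)"
proof (rule monoI)
  fix u u' :: real assume uu: "u \<le> u'"
  have H: "supnorm (trunc u (lam_app l x) - trunc u x) \<le> supnorm (trunc u' (lam_app l x) - trunc u' x)" for x
  proof (rule supnorm_le)
    fix i
    have "\<bar>(trunc u (lam_app l x) - trunc u x) $ i\<bar> \<le> \<bar>(trunc u' (lam_app l x) - trunc u' x) $ i\<bar>"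
      using clip_mono_diff[OF uu] by simp
    also have "\<dots> \<le> supnorm (trunc u' (lam_app l x) - trunc u' x)" by (rule supnorm_ge)
    finally show "\<bar>(trunc u (lam_app l x) - trunc u x) $ i\<bar> \<le> supnorm (trunc u' (lam_app l x) - trunc u' x)" .
  qed
  show "Sg l u \<le> Sg l u'"
    unfolding Sg_def by (rule cSUP_mono[OF _ Sg_bdd]) (use H in blast)+
qed

lemma exp_integrable: "integrable lborel (\<lambda>u::real. indicator {0<..} u * exp (- u))"
proof -
  have "(\<lambda>x::real. exp (- x)) integrable_on {0..}" using integrable_on_exp_minus_to_infinity[of 1 0] by simp
  then have "(\<lambda>x::real. exp (- x)) absolutely_integrable_on {0..}" by (rule nonnegative_absolutely_integrable_1) auto
  then have "integrable lebesgue (\<lambda>x::real. indicat_real {0..} x *\<^sub>R exp (- x))" by (simp add: set_integrable_def)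
  then have "integrable lborel (\<lambda>x::real. indicat_real {0..} x *\<^sub>R exp (- x))"
    by (subst (asm) integrable_completion) (auto intro!: borel_measurable_continuous_on_indicator continuous_intros)
  then show ?thesis
    by (rule Bochner_Integration.integrable_bound) (auto simp: indicator_def)
qed

lemma clip_id: "\<bar>t\<bar> \<le> u \<Longrightarrow> clip u t = t"
  by (auto simp: clip_def)

lemma gamma1_Sg: "gamma1 l = (LINT u:{0<..}|lborel. exp (- u) * min 1 (Sg l u))"
  by (simp add: gamma1_def Sg_def)

lemma minSg_nonneg[simp]: "0 \<le> min 1 (Sg l u)"
  using Sg_nonneg[of l u] by simp

lemma minSg_abs[simp]: "\<bar>min 1 (Sg l u)\<bar> \<le> 1"
  using Sg_nonneg[of l u] by simp

lemma expminSg_nonneg[simp]: "0 \<le> exp (- u) * min 1 (Sg l u)"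
  by (rule mult_nonneg_nonneg) (use minSg_nonneg in auto)

lemma gamma1_integrand_meas:
  "(\<lambda>u. indicator {0<..} u *\<^sub>R (exp (- u) * min 1 (Sg l u))) \<in> borel_measurable lborel"
proof -
  have "Sg l \<in> borel_measurable borel" by (rule borel_measurable_mono[OF Sg_mono])
  then have "Sg l \<in> borel_measurable lborel" by simp
  then show ?thesis by measurable
qed

lemma gamma1_integrable:
  "integrable lborel (\<lambda>u. indicator {0<..} u *\<^sub>R (exp (- u) * min 1 (Sg l u)))"
proof (rule Bochner_Integration.integrable_bound[OF exp_integrable gamma1_integrand_meas])
  show "AE x in lborel. norm (indicator {0<..} x *\<^sub>R (exp (- x) * min 1 (Sg l x))) \<le> norm (indicator {0<..} x * exp (- x))"
    by (auto simp: indicator_def abs_mult)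
qed

lemma gamma1_nonneg: "0 \<le> gamma1 l"
  unfolding gamma1_Sg set_lebesgue_integral_def
  by (intro Bochner_Integration.integral_nonneg) (auto simp: indicator_def)

lemma gamma1_lower:
  assumes "V > 0"
  shows "exp (- (V+1)) * min 1 (Sg l V) \<le> gamma1 l"
proof -
  let ?c = "exp (- (V+1)) * min 1 (Sg l V)"
  have "?c = LINT u|lborel. indicator {V..V+1} u * ?c"
    by (simp add: integral_indicator measure_lborel_Icc)
  also have "\<dots> \<le> LINT u|lborel. indicator {0<..} u *\<^sub>R (exp (- u) * min 1 (Sg l u))"
  proof (rule integral_mono[OF _ gamma1_integrable])
    show "integrable lborel (\<lambda>u. indicator {V..V + 1} u * ?c)" by simp
    fix u :: real
    show "indicator {V..V + 1} u * ?c \<le> indicator {0<..} u *\<^sub>R (exp (- u) * min 1 (Sg l u))"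
    proof (cases "u \<in> {V..V+1}")
      case True
      then have "Sg l V \<le> Sg l u" using Sg_mono by (auto simp: mono_def)
      then have "min 1 (Sg l V) \<le> min 1 (Sg l u)" by simp
      moreover have "exp (- (V+1)) \<le> exp (- u)" using True by simp
      ultimately have "?c \<le> exp (- u) * min 1 (Sg l u)"
        using Sg_nonneg by (intro mult_mono) auto
      then show ?thesis using True assms by (auto simp: indicator_def)
    next
      case False
      then show ?thesis by (auto simp: indicator_def)
    qed
  qed
  also have "\<dots> = gamma1 l" by (simp add: gamma1_Sg set_lebesgue_integral_def)
  finally show ?thesis .
qed

lemma gamma0_nonneg: "0 \<le> gamma0 l"
  unfolding gamma0_def
proof (rule sum_nonneg)
  fix i
  show "0 \<le> (SUP st\<in>{(s,t). s \<noteq> (t::real)}. ereal \<bar>ln ((l i (snd st) - l i (fst st)) / (snd st - fst st))\<bar>)"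
    by (rule SUP_upper2[of "(0,1)"]) auto
qed

lemma gamma_nonneg: "0 \<le> gamma l"
  unfolding gamma_def using gamma0_nonneg[of l] gamma1_nonneg[of l] by simp

lemma gamma1_le_gamma: "ereal (gamma1 l) \<le> gamma l"
  unfolding gamma_def using gamma0_nonneg[of l] add_increasing by blast

lemma gamma1_tendsto:
  assumes "(\<lambda>n. gamma (ls n)) \<longlonglongrightarrow> 0"
  shows "(\<lambda>n. gamma1 (ls n)) \<longlonglongrightarrow> 0"
proof -
  have "(\<lambda>n. ereal (gamma1 (ls n))) \<longlonglongrightarrow> 0"
    by (rule tendsto_sandwich[OF _ _ tendsto_const assms]) (auto simp: gamma1_nonneg gamma1_le_gamma)
  then show ?thesis by (simp add: zero_ereal_def lim_ereal)
qed

lemma Sg_close: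
  assumes "Sg l V < d" "\<bar>t\<bar> + d \<le> V"
  shows "\<bar>l i t - t\<bar> < d"
proof -
  define x :: "real^'a" where "x = (\<chi> j. t)"
  have "\<bar>(trunc V (lam_app l x) - trunc V x) $ i\<bar> \<le> Sg l V"
    using supnorm_ge Sg_upper order_trans by blast
  then have "\<bar>clip V (l i t) - clip V t\<bar> < d" using assms(1) by (simp add: x_def)
  moreover have "clip V t = t" using assms Sg_nonneg[of l V] by (intro clip_id) auto
  ultimately show ?thesis using assms(2) by (auto simp: clip_def min_def max_def split: if_splits)
qed

lemma gamma_close:
  assumes "(\<lambda>n. gamma (ls n)) \<longlonglongrightarrow> 0" "V > 0" "d > 0"
  shows "\<forall>\<^sub>F n in sequentially. \<forall>i t. \<bar>t\<bar> + d \<le> V \<longrightarrow> \<bar>ls n i t - t\<bar> < d"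
proof -
  have "exp (- (V+1)) * min 1 d > 0" using assms by simp
  then have "\<forall>\<^sub>F n in sequentially. gamma1 (ls n) < exp (- (V+1)) * min 1 d"
    by (rule order_tendstoD(2)[OF gamma1_tendsto[OF assms(1)]])
  then show ?thesis
  proof eventually_elim
    case (elim n)
    have "exp (- (V+1)) * min 1 (Sg (ls n) V) < exp (- (V+1)) * min 1 d"
      using gamma1_lower[OF assms(2), of "ls n"] elim by linarith
    then have "min 1 (Sg (ls n) V) < min 1 d" by simp
    then have "Sg (ls n) V < d" by linarith
    then show ?case using Sg_close by blast
  qed
qed

lemma cell_exists:
  fixes s :: "nat \<Rightarrow> real"
  assumes "s 0 \<le> t" "t < s m" "\<forall>j<m. s j < s (Suc j)"
  shows "\<exists>j<m. s j \<le> t \<and> t < s (Suc j)"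
  using assms
proof (induction m)
  case 0 then show ?case by simp
next
  case (Suc m)
  show ?case
  proof (cases "t < s m")
    case True
    then obtain j where "j<m" "s j \<le> t \<and> t < s (Suc j)" using Suc by auto
    then show ?thesis by (intro exI[of _ j]) auto
  next
    case False
    then show ?thesis using Suc by (intro exI[of _ m]) auto
  qed
qed

definition same_cell :: "('n \<Rightarrow> nat \<Rightarrow> real) \<Rightarrow> ('n \<Rightarrow> nat) \<Rightarrow> 'n \<Rightarrow> real \<Rightarrow> real \<Rightarrow> bool" where
  "same_cell s m i p q \<longleftrightarrow> (\<exists>j<m i. s i j \<le> p \<and> p < s i (Suc j) \<and> s i j \<le> q \<and> q < s i (Suc j))"

definition is_part :: "real^'n::finite \<Rightarrow> real^'n \<Rightarrow> ('n \<Rightarrow> nat \<Rightarrow> real) \<Rightarrow> ('n \<Rightarrow> nat) \<Rightarrow> bool" where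
  "is_part a b s m \<longleftrightarrow> (\<forall>i. s i 0 = a$i \<and> s i (m i) = b$i \<and> (\<forall>j < m i. s i j < s i (Suc j)))"

lemma Dspace_grid:
  fixes \<sigma> :: "real^'n::finite \<Rightarrow> 'a::metric_space"
  assumes "\<sigma> \<in> Dspace" "\<forall>i. a$i < b$i" "\<epsilon> > 0"
  shows "\<exists>s m. is_part a b s m \<and>
     (\<forall>x y. (\<forall>i. same_cell s m i (x$i) (y$i)) \<longrightarrow> dist (\<sigma> x) (\<sigma> y) \<le> \<epsilon>)"
proof -
  obtain s m where sm: "\<forall>i. s i 0 = a$i \<and> s i (m i) = b$i \<and> (\<forall>j < m i. s i j < s i (Suc j))"
    and g: "\<forall>k :: 'n \<Rightarrow> nat. (\<forall>i. k i < m i) \<longrightarrow>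
            (\<forall>x y. (\<forall>i. s i (k i) \<le> x$i \<and> x$i < s i (Suc (k i)) \<and>
                        s i (k i) \<le> y$i \<and> y$i < s i (Suc (k i)))
                   \<longrightarrow> dist (\<sigma> x) (\<sigma> y) \<le> \<epsilon>)"
    using assms unfolding Dspace_def by blast
  have "dist (\<sigma> x) (\<sigma> y) \<le> \<epsilon>" if "\<forall>i. same_cell s m i (x$i) (y$i)" for x y
  proof -
    from that obtain k where "\<forall>i. k i < m i \<and> s i (k i) \<le> x$i \<and> x$i < s i (Suc (k i)) \<and>
                        s i (k i) \<le> y$i \<and> y$i < s i (Suc (k i))"
      unfolding same_cell_def by metis
    then show ?thesis using g by blast
  qed
  then show ?thesis using sm unfolding is_part_def by blast
qed

lemma part_cell:
  assumes "is_part a b s m" "a$i \<le> t" "t < b$i"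
  shows "\<exists>j<m i. s i j \<le> t \<and> t < s i (Suc j)"
  using assms unfolding is_part_def by (intro cell_exists) auto

lemma Dspace_rc:
  fixes \<sigma> :: "real^'n::finite \<Rightarrow> 'a::metric_space"
  assumes "\<sigma> \<in> Dspace" "\<epsilon> > 0"
  shows "\<exists>\<delta>>0. \<forall>y. (\<forall>i. x$i \<le> y$i \<and> y$i < x$i + \<delta>) \<longrightarrow> dist (\<sigma> y) (\<sigma> x) \<le> \<epsilon>"
proof -
  define a :: "real^'n" where "a = (\<chi> i. x$i - 1)"
  define b :: "real^'n" where "b = (\<chi> i. x$i + 1)"
  obtain s m where p: "is_part a b s m"
    and g: "\<forall>x y. (\<forall>i. same_cell s m i (x$i) (y$i)) \<longrightarrow> dist (\<sigma> x) (\<sigma> y) \<le> \<epsilon>"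
    using Dspace_grid[OF assms(1) _ assms(2), of a b] by (auto simp: a_def b_def)
  have "\<forall>i. \<exists>j<m i. s i j \<le> x$i \<and> x$i < s i (Suc j)"
    using part_cell[OF p] by (auto simp: a_def b_def)
  then obtain J where J: "\<forall>i. J i < m i \<and> s i (J i) \<le> x$i \<and> x$i < s i (Suc (J i))" by metis
  define \<delta> where "\<delta> = Min (range (\<lambda>i. s i (Suc (J i)) - x$i))"
  have "\<delta> > 0" unfolding \<delta>_def using J by (subst Min_gr_iff) auto
  moreover have "\<delta> \<le> s i (Suc (J i)) - x$i" for i unfolding \<delta>_def by (rule Min_le) auto
  ultimately show ?thesis
    using g J unfolding same_cell_def
    by (intro exI[of _ \<delta>]) (smt (verit))
qed

lemma Dspace_upper_lim:
  fixes \<sigma> :: "real^'n::finite \<Rightarrow> 'a::metric_space"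
  assumes "\<sigma> \<in> Dspace" "(y \<longlongrightarrow> x) F" "\<forall>\<^sub>F k in F. \<forall>i. x$i \<le> y k $ i"
  shows "((\<lambda>k. \<sigma> (y k)) \<longlongrightarrow> \<sigma> x) F"
proof (rule tendstoI)
  fix e :: real assume "e > 0"
  then obtain \<delta> where "\<delta> > 0" and d: "\<forall>y. (\<forall>i. x$i \<le> y$i \<and> y$i < x$i + \<delta>) \<longrightarrow> dist (\<sigma> y) (\<sigma> x) \<le> e/2"
    using Dspace_rc[OF assms(1), of "e/2" x] by auto
  have "\<forall>\<^sub>F k in F. dist (y k) x < \<delta>" using tendstoD[OF assms(2) \<open>\<delta>>0\<close>] .
  with assms(3) show "\<forall>\<^sub>F k in F. dist (\<sigma> (y k)) (\<sigma> x) < e"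
  proof eventually_elim
    case (elim k)
    have "\<forall>i. x$i \<le> y k $i \<and> y k $ i < x$i + \<delta>"
    proof
      fix i
      have "dist (y k $ i) (x $ i) < \<delta>" using dist_vec_nth_le elim le_less_trans by blast
      then show "x$i \<le> y k $i \<and> y k $ i < x$i + \<delta>" using elim by (auto simp: dist_real_def)
    qed
    then have "dist (\<sigma> (y k)) (\<sigma> x) \<le> e/2" using d by blast
    then show ?case using \<open>e>0\<close> by linarith
  qed
qed

definition gk :: "nat \<Rightarrow> real^'n::finite \<Rightarrow> real^'n" where
  "gk k x = (\<chi> i. (real_of_int \<lfloor>2^k * x$i\<rfloor> + 1) / 2^k)"

lemma gk_bounds: "x$i < gk k x $ i \<and> gk k x $ i \<le> x$i + 1/2^k"
proof -
  have a: "real_of_int \<lfloor>2^k * x$i\<rfloor> \<le> 2^k * x$i" "2^k * x$i < real_of_int \<lfloor>2^k * x$i\<rfloor> + 1"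
    by linarith+
  have p: "(2::real)^k > 0" by simp
  have "x$i < (real_of_int \<lfloor>2^k * x$i\<rfloor> + 1) / 2^k"
    using a p by (simp add: field_simps)
  moreover have "(real_of_int \<lfloor>2^k * x$i\<rfloor> + 1) / 2^k \<le> x$i + 1/2^k"
    using a p by (simp add: field_simps)
  ultimately show ?thesis by (simp add: gk_def)
qed

lemma gk_tendsto: "(\<lambda>k. gk k x) \<longlonglongrightarrow> x"
proof (rule vec_tendstoI)
  fix i
  have "(\<lambda>k. x$i + 1/2^k) \<longlonglongrightarrow> x$i + 0"
    by (intro tendsto_intros LIMSEQ_divide_realpow_zero) auto
  then have h: "(\<lambda>k. x$i + 1/2^k) \<longlonglongrightarrow> x$i" by simp
  show "(\<lambda>k. gk k x $ i) \<longlonglongrightarrow> x $ i"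
    by (rule tendsto_sandwich[where f="\<lambda>k. x$i" and h="\<lambda>k. x$i + 1/2^k", OF _ _ tendsto_const h])
      (use gk_bounds[of x i] in \<open>auto intro!: always_eventually less_imp_le\<close>)
qed

lemma gk_meas:
  fixes \<sigma> :: "real^'n::finite \<Rightarrow> 'a::metric_space"
  shows "(\<lambda>x. \<sigma> (gk k x)) \<in> borel_measurable borel"
proof -
  define h :: "real^'n \<Rightarrow> ('n \<Rightarrow> int)" where "h x = (\<lambda>i. \<lfloor>2^k * x$i\<rfloor>)" for x
  define F :: "('n \<Rightarrow> int) \<Rightarrow> real^'n \<Rightarrow> 'a" where "F z x = \<sigma> (\<chi> i. (real_of_int (z i) + 1) / 2^k)" for z x
  have hm: "h \<in> borel \<rightarrow>\<^sub>M count_space UNIV"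
  proof (subst measurable_count_space_eq2_countable, safe)
    fix z :: "'n \<Rightarrow> int"
    have "h -` {z} \<inter> space borel = {x::real^'n. \<forall>i. \<lfloor>2^k * x$i\<rfloor> = z i}"
      by (auto simp: h_def)
    also have "\<dots> \<in> sets borel" by measurable
    finally show "h -` {z} \<inter> space borel \<in> sets borel" .
  qed auto
  have "(\<lambda>x. F (h x) x) \<in> borel_measurable borel"
    by (rule measurable_compose_countable'[OF _ hm]) (auto simp: F_def)
  then show ?thesis by (simp add: F_def h_def gk_def)
qed

lemma Dspace_borel:
  fixes \<sigma> :: "real^'n::finite \<Rightarrow> 'a::metric_space"
  assumes "\<sigma> \<in> Dspace"
  shows "\<sigma> \<in> borel_measurable borel"
proof (rule borel_measurable_LIMSEQ_metric[OF gk_meas])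
  fix x :: "real^'n"
  show "(\<lambda>k. \<sigma> (gk k x)) \<longlonglongrightarrow> \<sigma> x"
  proof (rule Dspace_upper_lim[OF assms gk_tendsto always_eventually])
    show "\<forall>k. \<forall>i. x$i \<le> gk k x $ i" using gk_bounds less_imp_le by blast
  qed
qed

context
  fixes \<rho> \<sigma> :: "real^'n::finite \<Rightarrow> 'a::{metric_space,second_countable_topology}"
  assumes r1: "\<forall>p q :: 'a. dist p q \<le> 1"
begin

lemma dlu_bdd: "bdd_above (range (\<lambda>x. dist (\<rho> (trunc u x)) (\<sigma> (trunc u (lam_app l x)))))"
  using r1 by (intro bdd_aboveI[of _ 1]) auto

lemma dlu_upper: "dist (\<rho> (trunc u x)) (\<sigma> (trunc u (lam_app l x))) \<le> dlu \<rho> \<sigma> l u"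
  unfolding dlu_def by (rule cSUP_upper[OF _ dlu_bdd]) auto

lemma dlu_least: "(\<And>x. dist (\<rho> (trunc u x)) (\<sigma> (trunc u (lam_app l x))) \<le> c) \<Longrightarrow> dlu \<rho> \<sigma> l u \<le> c"
  unfolding dlu_def by (rule cSUP_least) auto

lemma dlu_nonneg: "0 \<le> dlu \<rho> \<sigma> l u"
  using dlu_upper zero_le_dist order_trans by blast

lemma dlu_le1: "dlu \<rho> \<sigma> l u \<le> 1"
  using r1 by (intro dlu_least) auto

lemma clip_mono: "a \<le> b \<Longrightarrow> clip u a \<le> clip u b"
  by (auto simp: clip_def)

lemma clip_tendsto: "(f \<longlongrightarrow> a) F \<Longrightarrow> ((\<lambda>k. clip u (f k)) \<longlongrightarrow> clip u a) F"
  unfolding clip_def by (intro tendsto_intros)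

lemma dlu_meas:
  assumes D: "\<rho> \<in> Dspace" "\<sigma> \<in> Dspace"
    and cont: "\<And>i. continuous_on UNIV (l i)" and mon: "\<And>i. mono (l i)"
  shows "dlu \<rho> \<sigma> l \<in> borel_measurable borel"
proof -
  define Q :: "(real^'n) set" where "Q = range (\<lambda>z::'n\<Rightarrow>rat. \<chi> i. real_of_rat (z i))"
  define f where "f q u = dist (\<rho> (trunc u q)) (\<sigma> (trunc u (lam_app l q)))" for q u
  have cQ: "countable Q" unfolding Q_def by simp
  have gQ: "gk k x \<in> Q" for k x
    unfolding Q_def
    by (rule image_eqI[where x="\<lambda>i. (of_int \<lfloor>2^k*x$i\<rfloor> + 1)/2^k"])
       (simp_all add: gk_def of_rat_divide of_rat_add of_rat_power)
  have fb: "bdd_above ((\<lambda>q. f q u) ` Q)" for u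
    using r1 unfolding f_def by (intro bdd_aboveI[of _ 1]) auto
  have eq: "dlu \<rho> \<sigma> l u = (SUP q\<in>Q. f q u)" for u
  proof (rule antisym)
    show "dlu \<rho> \<sigma> l u \<le> (SUP q\<in>Q. f q u)"
    proof (rule dlu_least)
      fix x
      have lim1: "(\<lambda>k. \<rho> (trunc u (gk k x))) \<longlonglongrightarrow> \<rho> (trunc u x)"
      proof (rule Dspace_upper_lim[OF D(1)])
        show "(\<lambda>k. trunc u (gk k x)) \<longlonglongrightarrow> trunc u x"
        proof (rule vec_tendstoI)
          fix i show "(\<lambda>k. trunc u (gk k x) $ i) \<longlonglongrightarrow> trunc u x $ i"
            using tendsto_vec_nth[OF gk_tendsto[of x], of i] by (simp add: clip_tendsto)
        qed
        show "\<forall>\<^sub>F k in sequentially. \<forall>i. trunc u x $ i \<le> trunc u (gk k x) $ i"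
        proof -
          have "\<forall>k i. x$i \<le> gk k x $ i" using gk_bounds less_imp_le by blast
          then show ?thesis by (auto intro!: always_eventually clip_mono)
        qed
      qed
      have lim2: "(\<lambda>k. \<sigma> (trunc u (lam_app l (gk k x)))) \<longlonglongrightarrow> \<sigma> (trunc u (lam_app l x))"
      proof (rule Dspace_upper_lim[OF D(2)])
        show "(\<lambda>k. trunc u (lam_app l (gk k x))) \<longlonglongrightarrow> trunc u (lam_app l x)"
        proof (rule vec_tendstoI)
          fix i
          have "isCont (l i) (x$i)" using cont[of i] by (simp add: continuous_on_eq_continuous_at)
          then have "(\<lambda>k. l i (gk k x $ i)) \<longlonglongrightarrow> l i (x $ i)"
            using tendsto_vec_nth[OF gk_tendsto[of x], of i] isCont_tendsto_compose by blast
          then show "(\<lambda>k. trunc u (lam_app l (gk k x)) $ i) \<longlonglongrightarrow> trunc u (lam_app l x) $ i"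
            by (simp add: clip_tendsto)
        qed
        show "\<forall>\<^sub>F k in sequentially. \<forall>i. trunc u (lam_app l x) $ i \<le> trunc u (lam_app l (gk k x)) $ i"
        proof -
          have "\<forall>k i. l i (x$i) \<le> l i (gk k x $ i)" using gk_bounds less_imp_le mon monoD by metis
          then show ?thesis by (auto intro!: always_eventually clip_mono)
        qed
      qed
      have lim: "(\<lambda>k. f (gk k x) u) \<longlonglongrightarrow> f x u"
        unfolding f_def by (intro tendsto_dist lim1 lim2)
      show "dist (\<rho> (trunc u x)) (\<sigma> (trunc u (lam_app l x))) \<le> (SUP q\<in>Q. f q u)"
        unfolding f_def[symmetric]
        by (rule LIMSEQ_le_const2[OF lim]) (use gQ fb in \<open>auto intro!: cSUP_upper\<close>)
    qed
    show "(SUP q\<in>Q. f q u) \<le> dlu \<rho> \<sigma> l u"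
      using gQ by (intro cSUP_least) (auto simp: f_def dlu_upper)
  qed
  have fm: "(\<lambda>u. f q u) \<in> borel_measurable borel" for q
  proof -
    have c1: "(\<lambda>u. trunc u q) \<in> borel_measurable borel"
      unfolding trunc_def by (intro borel_measurable_continuous_onI continuous_intros)
    have c2: "(\<lambda>u. trunc u (lam_app l q)) \<in> borel_measurable borel"
      unfolding trunc_def by (intro borel_measurable_continuous_onI continuous_intros)
    show ?thesis unfolding f_def
      by (intro borel_measurable_dist measurable_compose[OF c1 Dspace_borel[OF D(1)]]
            measurable_compose[OF c2 Dspace_borel[OF D(2)]])
  qed
  have "(\<lambda>u. SUP q\<in>Q. f q u) \<in> borel_measurable borel"
    by (rule borel_measurable_cSUP[OF cQ fm fb])
  moreover have "dlu \<rho> \<sigma> l = (\<lambda>u. SUP q\<in>Q. f q u)" using eq by (rule ext)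
  ultimately show ?thesis by simp
qed

lemma dlu_integrable:
  assumes "dlu \<rho> \<sigma> l \<in> borel_measurable borel"
  shows "integrable lborel (\<lambda>u. indicator {0<..} u *\<^sub>R (exp (- u) * dlu \<rho> \<sigma> l u))"
proof (rule Bochner_Integration.integrable_bound[OF exp_integrable])
  have "dlu \<rho> \<sigma> l \<in> borel_measurable lborel" using assms by simp
  then show "(\<lambda>u. indicator {0<..} u *\<^sub>R (exp (- u) * dlu \<rho> \<sigma> l u)) \<in> borel_measurable lborel"
    by measurable
  show "AE x in lborel. norm (indicator {0<..} x *\<^sub>R (exp (- x) * dlu \<rho> \<sigma> l x)) \<le> norm (indicator {0<..} x * exp (- x))"
    using dlu_nonneg dlu_le1 by (auto simp: indicator_def abs_mult intro!: mult_left_le)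
qed

end

lemma Lambda_cont: "l \<in> Lambda \<Longrightarrow> continuous_on UNIV (l i)"
  unfolding Lambda_def using lipschitz_on_continuous_on by blast

lemma Lambda_mono: "l \<in> Lambda \<Longrightarrow> mono (l i)"
  unfolding Lambda_def using strict_mono_mono by blast

lemma int_lower:
  fixes h :: "real \<Rightarrow> real" and a c :: real
  assumes int: "integrable lborel (\<lambda>u. indicator {0<..} u *\<^sub>R (exp (- u) * h u))"
    and a: "0 < a" and c: "\<forall>u\<in>{a..a+1}. c \<le> h u" and h0: "\<forall>u. 0 \<le> h u" and c0: "0 \<le> c"
  shows "exp (- (a+1)) * c \<le> (LINT u:{0<..}|lborel. exp (- u) * h u)"
proof -
  let ?c = "exp (- (a+1)) * c"
  have "?c = LINT u|lborel. indicator {a..a+1} u * ?c"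
    using integral_mult_left_zero[where f="indicator {a..a+1}" and M = "lborel :: real measure" and c="?c"] by simp
  also have "\<dots> \<le> LINT u|lborel. indicator {0<..} u *\<^sub>R (exp (- u) * h u)"
  proof (rule integral_mono[OF _ int])
    show "integrable lborel (\<lambda>u. indicator {a..a + 1} u * ?c)" by simp
    fix u :: real
    show "indicator {a..a + 1} u * ?c \<le> indicator {0<..} u *\<^sub>R (exp (- u) * h u)"
    proof (cases "u \<in> {a..a+1}")
      case True
      have "exp (- (a+1)) \<le> exp (- u)" using True by simp
      then have "?c \<le> exp (- u) * h u"
        using c True c0 by (intro mult_mono) auto
      then show ?thesis using True a by (auto simp: indicator_def)
    next
      case False
      then show ?thesis using h0 by (auto simp: indicator_def)
    qed
  qed
  also have "\<dots> = (LINT u:{0<..}|lborel. exp (- u) * h u)" by (simp add: set_lebesgue_integral_def)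
  finally show ?thesis .
qed

lemma dS_nonneg: "0 \<le> dS \<rho> \<sigma>"
  unfolding dS_def by (rule INF_greatest) (use gamma_nonneg in \<open>auto simp: le_max_iff_disj\<close>)

lemma forward:
  fixes \<sigma>s :: "nat \<Rightarrow> real^'n::finite \<Rightarrow> 'a::polish_space"
    and \<sigma> :: "real^'n \<Rightarrow> 'a"
  assumes r1: "\<forall>p q :: 'a. dist p q \<le> 1"
    and D: "\<forall>n. \<sigma>s n \<in> Dspace" "\<sigma> \<in> Dspace"
    and lim: "((\<lambda>n. dS (\<sigma>s n) \<sigma>) \<longlongrightarrow> 0) sequentially"
  shows "\<exists>ls :: nat \<Rightarrow> 'n \<Rightarrow> real \<Rightarrow> real.
       (\<forall>n. ls n \<in> Lambda) \<and>
       ((\<lambda>n. gamma (ls n)) \<longlongrightarrow> 0) sequentially \<and>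
       (\<forall>K. compact K \<longrightarrow>
          (\<forall>\<epsilon>>0. \<forall>\<^sub>F n in sequentially.
             \<forall>x\<in>K. dist (\<sigma>s n x) (\<sigma> (lam_app (ls n) x)) < \<epsilon>))"
proof -
  define I where "I n l = (LINT u:{0<..}|lborel. exp (- u) * dlu (\<sigma>s n) \<sigma> l u)" for n l
  define e where "e n = dS (\<sigma>s n) \<sigma> + ereal (inverse (real (Suc n)))" for n
  have I0: "0 \<le> I n l" for n l
    unfolding I_def set_lebesgue_integral_def
    by (intro Bochner_Integration.integral_nonneg) (auto simp: indicator_def intro!: mult_nonneg_nonneg dlu_nonneg[OF r1])
  have "\<forall>\<^sub>F n in sequentially. dS (\<sigma>s n) \<sigma> < 1"
    using order_tendstoD(2)[OF lim, of 1] by simp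
  then obtain N where N: "\<And>n. n \<ge> N \<Longrightarrow> dS (\<sigma>s n) \<sigma> < 1" by (auto simp: eventually_sequentially)
  have "\<exists>l. l \<in> Lambda \<and> max (gamma l) (ereal (I n l)) < e n" if "n \<ge> N" for n
  proof -
    have "dS (\<sigma>s n) \<sigma> < e n"
      using N[OF that] dS_nonneg[of "\<sigma>s n" \<sigma>] unfolding e_def
      by (cases "dS (\<sigma>s n) \<sigma>") auto
    then show ?thesis unfolding dS_def I_def by (subst (asm) INF_less_iff) auto
  qed
  then obtain L where L: "\<And>n. n \<ge> N \<Longrightarrow> L n \<in> Lambda \<and> max (gamma (L n)) (ereal (I n (L n))) < e n"
    by metis
  define ls where "ls n = L (max n N)" for n
  have lsL: "\<forall>n. ls n \<in> Lambda" unfolding ls_def using L by simp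
  have ev: "\<forall>\<^sub>F n in sequentially. max (gamma (ls n)) (ereal (I n (ls n))) < e n"
    unfolding eventually_sequentially ls_def using L by (intro exI[of _ N]) auto
  have e0: "e \<longlonglongrightarrow> 0"
  proof -
    have "(\<lambda>n. ereal (inverse (real (Suc n)))) \<longlonglongrightarrow> ereal 0"
      by (subst lim_ereal) (rule LIMSEQ_inverse_real_of_nat)
    then have "e \<longlonglongrightarrow> 0 + ereal 0" unfolding e_def
      by (intro tendsto_add_ereal lim) auto
    then show ?thesis by simp
  qed
  have g: "(\<lambda>n. gamma (ls n)) \<longlonglongrightarrow> 0"
    by (rule tendsto_sandwich[OF _ _ tendsto_const e0])
       (use ev gamma_nonneg in \<open>auto elim!: eventually_mono\<close>)
  have "(\<lambda>n. ereal (I n (ls n))) \<longlonglongrightarrow> 0"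
    by (rule tendsto_sandwich[OF _ _ tendsto_const e0])
       (use ev I0 in \<open>auto elim!: eventually_mono\<close>)
  then have Ilim: "(\<lambda>n. I n (ls n)) \<longlonglongrightarrow> 0" by (simp add: zero_ereal_def lim_ereal)
  have unif: "\<forall>\<^sub>F n in sequentially. \<forall>x\<in>K. dist (\<sigma>s n x) (\<sigma> (lam_app (ls n) x)) < \<epsilon>"
    if K: "compact K" and ep: "\<epsilon> > 0" for K \<epsilon>
  proof -
    obtain B where B: "\<forall>x\<in>K. norm x \<le> B" using compact_imp_bounded[OF K] bounded_iff by blast
    define U where "U = max B 1"
    have U0: "U > 0" unfolding U_def by simp
    have KU: "\<bar>x$i\<bar> \<le> U" if "x \<in> K" for x i
    proof -
      have "\<bar>x$i\<bar> \<le> norm x" by (rule component_le_norm_cart)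
      also have "\<dots> \<le> B" using B that by blast
      also have "B \<le> U" unfolding U_def by simp
      finally show ?thesis .
    qed
    have ev1: "\<forall>\<^sub>F n in sequentially. \<forall>i t. \<bar>t\<bar> + 1/2 \<le> U+1 \<longrightarrow> \<bar>ls n i t - t\<bar> < 1/2"
      by (rule gamma_close[OF g]) (use U0 in auto)
    have ev2: "\<forall>\<^sub>F n in sequentially. I n (ls n) < exp (- (U+2)) * \<epsilon>"
      by (rule order_tendstoD(2)[OF Ilim]) (use ep in simp)
    from ev1 ev2 show ?thesis
    proof eventually_elim
      case (elim n)
      have "\<exists>u\<in>{U+1..U+2}. dlu (\<sigma>s n) \<sigma> (ls n) u < \<epsilon>"
      proof (rule ccontr)
        assume "\<not> ?thesis"
        then have c: "\<forall>u\<in>{(U+1)..(U+1)+1}. \<epsilon> \<le> dlu (\<sigma>s n) \<sigma> (ls n) u" by (auto simp: not_less)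
        have "exp (- ((U+1)+1)) * \<epsilon> \<le> I n (ls n)"
          unfolding I_def
        proof (rule int_lower[OF dlu_integrable[OF r1] _ c])
          show "dlu (\<sigma>s n) \<sigma> (ls n) \<in> borel_measurable borel"
            using lsL D by (intro dlu_meas[OF r1] Lambda_cont Lambda_mono) auto
          show "0 < U + 1" using U0 by simp
          show "\<forall>u. 0 \<le> dlu (\<sigma>s n) \<sigma> (ls n) u" using dlu_nonneg[OF r1] by blast
          show "0 \<le> \<epsilon>" using ep by simp
        qed
        then show False using elim(2) by (simp add: add.assoc)
      qed
      then obtain u where u: "U+1 \<le> u" "u \<le> U+2" "dlu (\<sigma>s n) \<sigma> (ls n) u < \<epsilon>" by auto
      show ?case
      proof
        fix x assume "x \<in> K"
        have xi: "\<bar>x$i\<bar> \<le> U" for i using KU \<open>x\<in>K\<close> by blast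
        have t1: "trunc u x = x"
          unfolding vec_eq_iff
        proof
          fix i show "trunc u x $ i = x $ i" using xi[of i] u(1) by (simp add: clip_id)
        qed
        have li: "\<bar>ls n i (x$i) - x$i\<bar> < 1/2" for i
        proof -
          have "\<bar>x$i\<bar> + 1/2 \<le> U+1" using xi[of i] by simp
          then show ?thesis using elim(1) by blast
        qed
        have t2: "trunc u (lam_app (ls n) x) = lam_app (ls n) x"
          unfolding vec_eq_iff
        proof
          fix i
          have "\<bar>ls n i (x$i)\<bar> \<le> u" using xi[of i] li[of i] u(1) by linarith
          then show "trunc u (lam_app (ls n) x) $ i = lam_app (ls n) x $ i" by (simp add: clip_id)
        qed
        have "dist (\<sigma>s n (trunc u x)) (\<sigma> (trunc u (lam_app (ls n) x))) \<le> dlu (\<sigma>s n) \<sigma> (ls n) u"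
          by (rule dlu_upper[OF r1])
        then show "dist (\<sigma>s n x) (\<sigma> (lam_app (ls n) x)) < \<epsilon>" using t1 t2 u(3) by simp
      qed
    qed
  qed
  show ?thesis using lsL g unif by blast
qed

lemma coord_case:
  fixes L :: "real \<Rightarrow> real"
  assumes mono: "mono L" and u: "u > 0" and d: "0 < \<delta>" "\<delta> \<le> u/2"
    and H: "\<forall>t. \<bar>t\<bar> \<le> u \<longrightarrow> \<bar>L t - t\<bar> < \<delta>"
  shows "(L (clip u t) = clip u (L t) \<and> \<bar>L (clip u t)\<bar> \<le> u + \<delta>) \<or>
    (u-\<delta> \<le> L (clip u t) \<and> L (clip u t) \<le> u+\<delta> \<and> u-\<delta> \<le> clip u (L t) \<and> clip u (L t) \<le> u+\<delta>) \<or>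
    (-u-\<delta> \<le> L (clip u t) \<and> L (clip u t) \<le> -u+\<delta> \<and> -u-\<delta> \<le> clip u (L t) \<and> clip u (L t) \<le> -u+\<delta>)"
proof (cases "t > u")
  case True
  then have c: "clip u t = u" using u by (simp add: clip_def)
  have h: "\<bar>L u - u\<bar> < \<delta>" using H u by simp
  have "L u \<le> L t" using True mono by (simp add: monoD)
  then show ?thesis using c h d u by (auto simp: clip_def)
next
  case False
  show ?thesis
  proof (cases "t < -u")
    case True
    then have c: "clip u t = -u" by (simp add: clip_def)
    have h: "\<bar>L (-u) - (-u)\<bar> < \<delta>" using H u by (metis abs_minus_cancel abs_of_pos order_refl)
    have "L t \<le> L (-u)" using True mono by (simp add: monoD)
    then show ?thesis using c h d u by (auto simp: clip_def)
  next
    case False2: False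
    then have c: "clip u t = t" using False by (simp add: clip_def)
    have h: "\<bar>L t - t\<bar> < \<delta>" using H False False2 by simp
    show ?thesis using c h d u False False2 by (auto simp: clip_def)
  qed
qed

lemma interval_cell:
  assumes p: "is_part a b s m" and c: "a$i \<le> c - \<delta>" "c + \<delta> < b$i" and d0: "0 \<le> \<delta>"
    and avoid: "\<forall>j\<le>m i. s i j < c - \<delta> \<or> s i j > c + \<delta>"
    and pq: "c-\<delta> \<le> x" "x \<le> c+\<delta>" "c-\<delta> \<le> y" "y \<le> c+\<delta>"
  shows "same_cell s m i x y"
proof -
  obtain j where j: "j < m i" "s i j \<le> c - \<delta>" "c - \<delta> < s i (Suc j)"
  proof -
    have "c - \<delta> < b$i" using c(2) d0 by linarith
    then show ?thesis using part_cell[OF p c(1)] that by blast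
  qed
  have "Suc j \<le> m i" using j by simp
  then have "s i (Suc j) < c - \<delta> \<or> s i (Suc j) > c + \<delta>" using avoid by blast
  then have "s i (Suc j) > c + \<delta>" using j by linarith
  then show ?thesis unfolding same_cell_def using j pq by (intro exI[of _ j]) auto
qed

lemma point_cell:
  assumes p: "is_part a b s m" and "a$i \<le> x" "x < b$i"
  shows "same_cell s m i x x"
  using part_cell[OF assms] unfolding same_cell_def by auto

definition boxa :: "nat \<Rightarrow> real^'n::finite" where "boxa N = (\<chi> i. - (real N + 1))"
definition boxb :: "nat \<Rightarrow> real^'n::finite" where "boxb N = (\<chi> i. real N + 1)"

definition gridP :: "(real^'n::finite \<Rightarrow> 'a::metric_space) \<Rightarrow> nat \<Rightarrow> nat \<Rightarrow> ('n \<Rightarrow> nat \<Rightarrow> real) \<times> ('n \<Rightarrow> nat)" where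
  "gridP \<sigma> N k = (SOME sm. is_part (boxa N) (boxb N) (fst sm) (snd sm) \<and>
     (\<forall>x y. (\<forall>i. same_cell (fst sm) (snd sm) i (x$i) (y$i)) \<longrightarrow> dist (\<sigma> x) (\<sigma> y) \<le> inverse (real (Suc k))))"

lemma gridP_prop:
  fixes \<sigma> :: "real^'n::finite \<Rightarrow> 'a::metric_space"
  assumes "\<sigma> \<in> Dspace"
  shows "is_part (boxa N) (boxb N) (fst (gridP \<sigma> N k)) (snd (gridP \<sigma> N k)) \<and>
     (\<forall>x y. (\<forall>i. same_cell (fst (gridP \<sigma> N k)) (snd (gridP \<sigma> N k)) i (x$i) (y$i)) \<longrightarrow>
        dist (\<sigma> x) (\<sigma> y) \<le> inverse (real (Suc k)))"
proof -
  have "\<exists>s m. is_part (boxa N) (boxb N) s m \<and>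
     (\<forall>x y. (\<forall>i. same_cell s m i (x$i) (y$i)) \<longrightarrow> dist (\<sigma> x) (\<sigma> y) \<le> inverse (real (Suc k)))"
    by (rule Dspace_grid[OF assms]) (auto simp: boxa_def boxb_def)
  then have "\<exists>sm. is_part (boxa N) (boxb N) (fst sm) (snd sm) \<and>
     (\<forall>x y. (\<forall>i. same_cell (fst sm) (snd sm) i (x$i) (y$i)) \<longrightarrow> dist (\<sigma> x) (\<sigma> y) \<le> inverse (real (Suc k)))"
    by auto
  then show ?thesis unfolding gridP_def by (rule someI_ex)
qed

definition badC :: "(real^'n::finite \<Rightarrow> 'a::metric_space) \<Rightarrow> real set" where
  "badC \<sigma> = (\<lambda>(N,k,i,j). fst (gridP \<sigma> N k) i j) ` (UNIV :: (nat \<times> nat \<times> 'n \<times> nat) set) \<union>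
             (\<lambda>(N,k,i,j). - fst (gridP \<sigma> N k) i j) ` (UNIV :: (nat \<times> nat \<times> 'n \<times> nat) set)"

lemma badC_countable: "countable (badC \<sigma>)"
  unfolding badC_def by simp

lemma ptwise:
  fixes \<sigma>s :: "nat \<Rightarrow> real^'n::finite \<Rightarrow> 'a::polish_space"
    and \<sigma> :: "real^'n \<Rightarrow> 'a"
  assumes r1: "\<forall>p q :: 'a. dist p q \<le> 1"
    and D: "\<sigma> \<in> Dspace"
    and L: "\<forall>n. ls n \<in> Lambda"
    and g: "((\<lambda>n. gamma (ls n)) \<longlongrightarrow> 0) sequentially"
    and U: "\<forall>K. compact K \<longrightarrow> (\<forall>\<epsilon>>0. \<forall>\<^sub>F n in sequentially.
             \<forall>x\<in>K. dist (\<sigma>s n x) (\<sigma> (lam_app (ls n) x)) < \<epsilon>)"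
    and u: "u > 0" "u \<notin> badC \<sigma>"
  shows "(\<lambda>n. dlu (\<sigma>s n) \<sigma> (ls n) u) \<longlonglongrightarrow> 0"
proof (rule tendstoI)
  fix e :: real assume e: "e > 0"
  obtain k where k: "inverse (real (Suc k)) < e/2" using reals_Archimedean[of "e/2"] e by auto
  obtain N :: nat where N: "u + 1 \<le> real N" using real_arch_simple by blast
  define s where "s = fst (gridP \<sigma> N k)"
  define m where "m = snd (gridP \<sigma> N k)"
  have part: "is_part (boxa N) (boxb N) s m"
    and grid: "\<And>x y. (\<forall>i. same_cell s m i (x$i) (y$i)) \<Longrightarrow> dist (\<sigma> x) (\<sigma> y) \<le> inverse (real (Suc k))"
    using gridP_prop[OF D, of N k] unfolding s_def m_def by auto
  define F where "F = (\<Union>i. (\<lambda>j. s i j) ` {..m i})"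
  have Ffin: "finite F" unfolding F_def by simp
  have Fu: "\<forall>p\<in>F. p \<noteq> u" and Fmu: "\<forall>p\<in>F. p \<noteq> -u"
  proof -
    have "s i j \<noteq> u" "s i j \<noteq> -u" for i j
    proof -
      have "fst (gridP \<sigma> N k) i j \<in> badC \<sigma>" "- fst (gridP \<sigma> N k) i j \<in> badC \<sigma>"
        unfolding badC_def by (auto intro!: image_eqI[where x="(N,k,i,j)"])
      then show "s i j \<noteq> u" "s i j \<noteq> -u" using u(2) unfolding s_def by auto
    qed
    then show "\<forall>p\<in>F. p \<noteq> u" "\<forall>p\<in>F. p \<noteq> -u" unfolding F_def by auto
  qed
  obtain d1 where d1: "d1 > 0" "\<forall>x\<in>F. x \<noteq> u \<longrightarrow> d1 \<le> dist u x" using finite_set_avoid[OF Ffin, of u] by blast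
  obtain d2 where d2: "d2 > 0" "\<forall>x\<in>F. x \<noteq> -u \<longrightarrow> d2 \<le> dist (-u) x" using finite_set_avoid[OF Ffin, of "-u"] by blast
  define \<delta> where "\<delta> = min (min d1 d2 / 2) (min (1/2) (u/2))"
  have d0: "0 < \<delta>" "\<delta> \<le> 1/2" "\<delta> \<le> u/2" using d1 d2 u unfolding \<delta>_def by auto
  have avoid1: "s i j < u - \<delta> \<or> s i j > u + \<delta>" if "j \<le> m i" for i j
  proof -
    have "s i j \<in> F" unfolding F_def using that by auto
    then have "d1 \<le> \<bar>u - s i j\<bar>" using d1 Fu by (auto simp: dist_real_def)
    moreover have "\<delta> < d1" using d1 d2 unfolding \<delta>_def by linarith
    ultimately show ?thesis by linarith
  qed
  have avoid2: "s i j < -u - \<delta> \<or> s i j > -u + \<delta>" if "j \<le> m i" for i j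
  proof -
    have "s i j \<in> F" unfolding F_def using that by auto
    then have "d2 \<le> \<bar>-u - s i j\<bar>" using d2 Fmu by (auto simp: dist_real_def)
    moreover have "\<delta> < d2" using d1 d2 unfolding \<delta>_def by linarith
    ultimately show ?thesis by linarith
  qed
  define K :: "(real^'n) set" where "K = cbox (\<chi> i. -u) (\<chi> i. u)"
  have ev1: "\<forall>\<^sub>F n in sequentially. \<forall>i t. \<bar>t\<bar> + \<delta> \<le> u+1 \<longrightarrow> \<bar>ls n i t - t\<bar> < \<delta>"
    by (rule gamma_close[OF g]) (use u d0 in auto)
  have ev2: "\<forall>\<^sub>F n in sequentially. \<forall>x\<in>K. dist (\<sigma>s n x) (\<sigma> (lam_app (ls n) x)) < e/2"
  proof -
    have cK: "compact K" unfolding K_def by simp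
    have "e/2 > 0" using e by simp
    then show ?thesis using U cK by blast
  qed
  from ev1 ev2 show "\<forall>\<^sub>F n in sequentially. dist (dlu (\<sigma>s n) \<sigma> (ls n) u) 0 < e"
  proof eventually_elim
    case (elim n)
    have H: "\<forall>t. \<bar>t\<bar> \<le> u \<longrightarrow> \<bar>ls n i t - t\<bar> < \<delta>" for i
      using elim(1) d0 by auto
    have "dlu (\<sigma>s n) \<sigma> (ls n) u \<le> e/2 + inverse (real (Suc k))"
    proof (rule dlu_least[OF r1])
      fix x :: "real^'n"
      define y where "y = trunc u x"
      define p where "p = lam_app (ls n) y"
      define q where "q = trunc u (lam_app (ls n) x)"
      have "y \<in> K" unfolding K_def y_def mem_box_cart(2)
        using clip_bound[of u] u by (auto simp: abs_le_iff) (smt (verit) clip_bound)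
      then have 1: "dist (\<sigma>s n y) (\<sigma> p) < e/2" using elim(2) unfolding p_def by blast
      have "same_cell s m i (p$i) (q$i)" for i
      proof -
        have mono: "mono (ls n i)" using Lambda_mono L by blast
        have pi: "p$i = ls n i (clip u (x$i))" and qi: "q$i = clip u (ls n i (x$i))"
          unfolding p_def q_def y_def by simp_all
        have ba: "boxa N $ i = - (real N + 1)" and bb: "boxb N $ i = real N + 1"
          by (simp_all add: boxa_def boxb_def)
        from coord_case[OF mono u(1) d0(1) d0(3) H[of i], of "x$i"] show ?thesis
          unfolding pi[symmetric] qi[symmetric]
        proof (elim disjE conjE)
          assume "p$i = q$i" "\<bar>p$i\<bar> \<le> u + \<delta>"
          then show ?thesis using point_cell[OF part, of i "p$i"] ba bb N d0 by auto
        next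
          assume "u - \<delta> \<le> p$i" "p$i \<le> u + \<delta>" "u - \<delta> \<le> q$i" "q$i \<le> u + \<delta>"
          then show ?thesis
            by (intro interval_cell[OF part]) (use ba bb N d0 avoid1 in auto)
        next
          assume "-u - \<delta> \<le> p$i" "p$i \<le> -u + \<delta>" "-u - \<delta> \<le> q$i" "q$i \<le> -u + \<delta>"
          then show ?thesis
            by (intro interval_cell[OF part]) (use ba bb N d0 avoid2 in auto)
        qed
      qed
      then have 2: "dist (\<sigma> p) (\<sigma> q) \<le> inverse (real (Suc k))" using grid by blast
      have "dist (\<sigma>s n y) (\<sigma> q) \<le> dist (\<sigma>s n y) (\<sigma> p) + dist (\<sigma> p) (\<sigma> q)"
        by (rule dist_triangle)
      then show "dist (\<sigma>s n (trunc u x)) (\<sigma> (trunc u (lam_app (ls n) x))) \<le> e/2 + inverse (real (Suc k))"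
        using 1 2 unfolding y_def q_def by linarith
    qed
    then show ?case using k dlu_nonneg[OF r1, of "\<sigma>s n" \<sigma> "ls n" u] by simp
  qed
qed

lemma backward:
  fixes \<sigma>s :: "nat \<Rightarrow> real^'n::finite \<Rightarrow> 'a::polish_space"
    and \<sigma> :: "real^'n \<Rightarrow> 'a"
  assumes r1: "\<forall>p q :: 'a. dist p q \<le> 1"
    and D: "\<forall>n. \<sigma>s n \<in> Dspace" "\<sigma> \<in> Dspace"
    and L: "\<forall>n. ls n \<in> Lambda"
    and g: "((\<lambda>n. gamma (ls n)) \<longlongrightarrow> 0) sequentially"
    and U: "\<forall>K. compact K \<longrightarrow> (\<forall>\<epsilon>>0. \<forall>\<^sub>F n in sequentially.
             \<forall>x\<in>K. dist (\<sigma>s n x) (\<sigma> (lam_app (ls n) x)) < \<epsilon>)"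
  shows "((\<lambda>n. dS (\<sigma>s n) \<sigma>) \<longlongrightarrow> 0) sequentially"
proof -
  define I where "I n = (LINT u:{0<..}|lborel. exp (- u) * dlu (\<sigma>s n) \<sigma> (ls n) u)" for n
  define f where "f n u = indicator {0<..} u *\<^sub>R (exp (- u) * dlu (\<sigma>s n) \<sigma> (ls n) u)" for n u
  have int: "integrable lborel (f n)" for n
    unfolding f_def
    using L D by (intro dlu_integrable[OF r1] dlu_meas[OF r1] Lambda_cont Lambda_mono) auto
  have A1: "(\<lambda>u::real. 0::real) \<in> borel_measurable lborel" by simp
  have A2: "\<And>n. f n \<in> borel_measurable lborel" using int by (rule borel_measurable_integrable)
  have A3: "integrable lborel (\<lambda>u::real. indicator {0<..} u * exp (- u))" by (rule exp_integrable)
  have "AE u in lborel. u \<notin> badC \<sigma>"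
    by (rule AE_not_in[OF countable_imp_null_set_lborel[OF badC_countable]])
  then have A4: "AE u in lborel. (\<lambda>n. f n u) \<longlonglongrightarrow> 0"
  proof (rule AE_mp[OF _ AE_I2], intro impI)
    fix u :: real assume "u \<notin> badC \<sigma>"
    show "(\<lambda>n. f n u) \<longlonglongrightarrow> 0"
    proof (cases "u > 0")
      case True
      have "(\<lambda>n. dlu (\<sigma>s n) \<sigma> (ls n) u) \<longlonglongrightarrow> 0"
        by (rule ptwise[OF r1 D(2) L g U True \<open>u \<notin> badC \<sigma>\<close>])
      then have "(\<lambda>n. exp (- u) * dlu (\<sigma>s n) \<sigma> (ls n) u) \<longlonglongrightarrow> 0"
        by (rule tendsto_mult_right_zero)
      then show ?thesis using True by (simp add: f_def)
    next
      case False
      then show ?thesis by (simp add: f_def)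
    qed
  qed
  have A5: "\<And>n. AE u in lborel. norm (f n u) \<le> indicator {0<..} u * exp (- u)"
  proof -
    have dabs: "\<bar>dlu (\<sigma>s n) \<sigma> (ls n) u\<bar> \<le> 1" for n u
      using dlu_nonneg[OF r1, of "\<sigma>s n" \<sigma> "ls n" u] dlu_le1[OF r1, of "\<sigma>s n" \<sigma> "ls n" u] by simp
    show "AE u in lborel. norm (f n u) \<le> indicator {0<..} u * exp (- u)" for n
      using dabs by (intro AE_I2) (auto simp: f_def indicator_def abs_mult intro!: mult_left_le)
  qed
  have "(\<lambda>n. integral\<^sup>L lborel (f n)) \<longlonglongrightarrow> integral\<^sup>L lborel (\<lambda>u::real. 0::real)"
    using integral_dominated_convergence[OF A1 A2 A3 A4 A5] .
  moreover have "I = (\<lambda>n. integral\<^sup>L lborel (f n))"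
    by (rule ext) (simp add: I_def set_lebesgue_integral_def f_def[abs_def])
  ultimately have Ilim: "I \<longlonglongrightarrow> 0" by simp
  have "(\<lambda>n. max (gamma (ls n)) (ereal (I n))) \<longlonglongrightarrow> max 0 (ereal 0)"
    by (intro tendsto_max g) (simp add: lim_ereal Ilim)
  then have up: "(\<lambda>n. max (gamma (ls n)) (ereal (I n))) \<longlonglongrightarrow> 0" by (simp add: zero_ereal_def)
  have le: "dS (\<sigma>s n) \<sigma> \<le> max (gamma (ls n)) (ereal (I n))" for n
    unfolding dS_def I_def by (rule INF_lower2[OF L[rule_format, of n]]) simp
  show ?thesis
    by (rule tendsto_sandwich[OF _ _ tendsto_const up]) (use le dS_nonneg in \<open>auto intro!: always_eventually\<close>)
qed

theorem lemma10p1: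
  fixes \<sigma>s :: "nat \<Rightarrow> real^'n::finite \<Rightarrow> 'a::polish_space"
    and \<sigma> :: "real^'n \<Rightarrow> 'a"
  assumes r_le_1: "\<forall>p q :: 'a. dist p q \<le> 1"
    and "\<forall>n. \<sigma>s n \<in> Dspace" and "\<sigma> \<in> Dspace"
  shows "((\<lambda>n. dS (\<sigma>s n) \<sigma>) \<longlongrightarrow> 0) sequentially \<longleftrightarrow>
    (\<exists>ls :: nat \<Rightarrow> 'n \<Rightarrow> real \<Rightarrow> real.
       (\<forall>n. ls n \<in> Lambda) \<and>
       ((\<lambda>n. gamma (ls n)) \<longlongrightarrow> 0) sequentially \<and>
       (\<forall>K. compact K \<longrightarrow>
          (\<forall>\<epsilon>>0. \<forall>\<^sub>F n in sequentially.
             \<forall>x\<in>K. dist (\<sigma>s n x) (\<sigma> (lam_app (ls n) x)) < \<epsilon>)))"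
  (is "?L \<longleftrightarrow> ?R")
proof
  assume "?L"
  then show "?R" by (rule forward[OF assms])
next
  assume "\<exists>ls :: nat \<Rightarrow> 'n \<Rightarrow> real \<Rightarrow> real.
       (\<forall>n. ls n \<in> Lambda) \<and>
       ((\<lambda>n. gamma (ls n)) \<longlongrightarrow> 0) sequentially \<and>
       (\<forall>K. compact K \<longrightarrow>
          (\<forall>\<epsilon>>0. \<forall>\<^sub>F n in sequentially.
             \<forall>x\<in>K. dist (\<sigma>s n x) (\<sigma> (lam_app (ls n) x)) < \<epsilon>))"
  then obtain ls :: "nat \<Rightarrow> 'n \<Rightarrow> real \<Rightarrow> real" where
    "\<forall>n. ls n \<in> Lambda" "((\<lambda>n. gamma (ls n)) \<longlongrightarrow> 0) sequentially"
    "\<forall>K. compact K \<longrightarrow> (\<forall>\<epsilon>>0. \<forall>\<^sub>F n in sequentially.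
             \<forall>x\<in>K. dist (\<sigma>s n x) (\<sigma> (lam_app (ls n) x)) < \<epsilon>)" by blast
  then show "((\<lambda>n. dS (\<sigma>s n) \<sigma>) \<longlongrightarrow> 0) sequentially"
    by (rule backward[OF assms])
qed

end
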